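(* Let $\alpha>0$, $\gamma<0$, $\theta=(\alpha,-(\alpha+\gamma)/4,\gamma)$, and let $\mathcal{R}_\theta(1)$ be the moduli space of $\theta$-semistable representations of $\mathbf{Q}$ of dimension vector $(1,4,1)$. If $\gamma<-\alpha$, the points of $\mathcal{R}_\theta(1)$ are exactly the (isomorphism classes of) representations that are globally surjective and locally injective. If $\gamma>-\alpha$, the points of $\mathcal{R}_\theta(1)$ are exactly the representations that are globally injective and locally surjective.
   Context: The quiver $\mathbf{Q}$ has vertices $-1,0,1$, arrows $\eta_0,\dots,\eta_3:-1\to0$, $\phi_0,\dots,\phi_3:0\to1$ and relations $\phi_i\eta_j+\phi_j\eta_i=0$; a representation consists of vector spaces $V_{-1},V_0,V_1$ and linear maps $f_i:V_{-1}\to V_0$, $g_i:V_0\to V_1$ with $g_if_j+g_jf_i=0$. $R$ is globally injective (resp. surjective) if $\sum\lambda_if_i$ is injective (resp. $\sum\lambda_ig_i$ surjective) for all $\lambda\in\mathbb{C}^4\setminus\{0\}$; locally injective (resp. surjective) if this holds for all $[\lambda]\in\mathbb{P}^3$ outside a closed subset of codimension at least 2. $R$ is $\theta$-semistable (resp. stable) if $\theta\cdot\dim R=0$ and $\theta\cdot\dim S\le0$ for all subrepresentations $S$ (resp. $<0$ for all nonzero proper $S$); $\mathcal{R}_\theta(1)$ is King's GIT moduli space. *)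

theory Defs
  imports "HOL-Analysis.Analysis"
begin

text \<open>Representations of the quiver Q of dimension vector (1,4,1), realised on the
standard spaces V_{-1} = C^1, V_0 = C^4, V_1 = C^1.  Arrows are indexed by the
type 4 (elements 0,1,2,3).  f i : V_{-1} -> V_0 is a 4x1 matrix,
g i : V_0 -> V_1 a 1x4 matrix.\<close>

type_synonym rep141 = "(4 \<Rightarrow> complex^1^4) \<times> (4 \<Rightarrow> complex^4^1)"

definition is_rep :: "rep141 \<Rightarrow> bool" where
  "is_rep R \<longleftrightarrow> (\<forall>i j. snd R i ** fst R j + snd R j ** fst R i = 0)"

text \<open>The linear combination sum_i lambda_i A_i of matrices.\<close>
definition lincomb :: "complex^4 \<Rightarrow> (4 \<Rightarrow> complex^'m^'n) \<Rightarrow> complex^'m^'n" where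
  "lincomb l A = (\<chi> r c. \<Sum>i\<in>UNIV. l $ i * A i $ r $ c)"

definition globally_injective :: "rep141 \<Rightarrow> bool" where
  "globally_injective R \<longleftrightarrow> (\<forall>l. l \<noteq> 0 \<longrightarrow> inj ((*v) (lincomb l (fst R))))"

definition globally_surjective :: "rep141 \<Rightarrow> bool" where
  "globally_surjective R \<longleftrightarrow> (\<forall>l. l \<noteq> 0 \<longrightarrow> surj ((*v) (lincomb l (snd R))))"

subsection \<open>Projective 3-space and its Zariski topology\<close>

text \<open>A point [lambda] of P^3 is the set of nonzero multiples of lambda.\<close>
definition ppt :: "complex^4 \<Rightarrow> (complex^4) set" where
  "ppt l = {c *s l | c. c \<noteq> 0}"

definition P3 :: "(complex^4) set set" where
  "P3 = ppt ` (UNIV - {0})"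

text \<open>Homogeneous polynomial functions of degree d in four variables.\<close>
definition hom_poly :: "nat \<Rightarrow> (complex^4 \<Rightarrow> complex) \<Rightarrow> bool" where
  "hom_poly d p \<longleftrightarrow> (\<exists>c :: (4 \<Rightarrow> nat) \<Rightarrow> complex.
      p = (\<lambda>x. \<Sum>e\<in>{e. sum e UNIV = d}. c e * (\<Prod>i\<in>UNIV. (x $ i) ^ e i)))"

text \<open>Zariski-closed subsets of P^3: common zero loci of families of homogeneous polynomials.\<close>
definition zariski_closed :: "(complex^4) set set \<Rightarrow> bool" where
  "zariski_closed Z \<longleftrightarrow> (\<exists>F. (\<forall>p\<in>F. \<exists>d. hom_poly d p) \<and>
      Z = {ppt l | l. l \<noteq> 0 \<and> (\<forall>p\<in>F. p l = 0)})"

definition zariski_irreducible :: "(complex^4) set set \<Rightarrow> bool" where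
  "zariski_irreducible Y \<longleftrightarrow> zariski_closed Y \<and> Y \<noteq> {} \<and>
     (\<forall>Y1 Y2. zariski_closed Y1 \<and> zariski_closed Y2 \<and> Y = Y1 \<union> Y2 \<longrightarrow> Y = Y1 \<or> Y = Y2)"

text \<open>Topological codimension at least 2: every irreducible closed subset of Z is the
bottom of a strict chain of length 2 of irreducible closed subsets of P^3.\<close>
definition codim_ge2 :: "(complex^4) set set \<Rightarrow> bool" where
  "codim_ge2 Z \<longleftrightarrow> (\<forall>Y. zariski_irreducible Y \<and> Y \<subseteq> Z \<longrightarrow>
      (\<exists>Y1 Y2. zariski_irreducible Y1 \<and> zariski_irreducible Y2 \<and> Y \<subset> Y1 \<and> Y1 \<subset> Y2))"

definition locally_injective :: "rep141 \<Rightarrow> bool" where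
  "locally_injective R \<longleftrightarrow> (\<exists>Z. zariski_closed Z \<and> codim_ge2 Z \<and>
      (\<forall>l. l \<noteq> 0 \<and> ppt l \<notin> Z \<longrightarrow> inj ((*v) (lincomb l (fst R)))))"

definition locally_surjective :: "rep141 \<Rightarrow> bool" where
  "locally_surjective R \<longleftrightarrow> (\<exists>Z. zariski_closed Z \<and> codim_ge2 Z \<and>
      (\<forall>l. l \<noteq> 0 \<and> ppt l \<notin> Z \<longrightarrow> surj ((*v) (lincomb l (snd R)))))"

subsection \<open>Subrepresentations and King stability\<close>

definition is_subrep :: "rep141 \<Rightarrow> (complex^1) set \<Rightarrow> (complex^4) set \<Rightarrow> (complex^1) set \<Rightarrow> bool" where
  "is_subrep R Wm W0 W1 \<longleftrightarrow> vec.subspace Wm \<and> vec.subspace W0 \<and> vec.subspace W1 \<and>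
     (\<forall>i x. x \<in> Wm \<longrightarrow> fst R i *v x \<in> W0) \<and>
     (\<forall>i y. y \<in> W0 \<longrightarrow> snd R i *v y \<in> W1)"

definition theta_dot :: "real \<times> real \<times> real \<Rightarrow> nat \<times> nat \<times> nat \<Rightarrow> real" where
  "theta_dot th d = fst th * real (fst d) + fst (snd th) * real (fst (snd d))
                    + snd (snd th) * real (snd (snd d))"

definition sdim :: "(complex^1) set \<Rightarrow> (complex^4) set \<Rightarrow> (complex^1) set \<Rightarrow> nat \<times> nat \<times> nat" where
  "sdim Wm W0 W1 = (vec.dim Wm, vec.dim W0, vec.dim W1)"

definition semistable :: "real \<times> real \<times> real \<Rightarrow> rep141 \<Rightarrow> bool" where
  "semistable th R \<longleftrightarrow> theta_dot th (1, 4, 1) = 0 \<and>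
     (\<forall>Wm W0 W1. is_subrep R Wm W0 W1 \<longrightarrow> theta_dot th (sdim Wm W0 W1) \<le> 0)"

definition stable :: "real \<times> real \<times> real \<Rightarrow> rep141 \<Rightarrow> bool" where
  "stable th R \<longleftrightarrow> theta_dot th (1, 4, 1) = 0 \<and>
     (\<forall>Wm W0 W1. is_subrep R Wm W0 W1 \<and> (Wm, W0, W1) \<noteq> ({0}, {0}, {0})
        \<and> (Wm, W0, W1) \<noteq> (UNIV, UNIV, UNIV) \<longrightarrow> theta_dot th (sdim Wm W0 W1) < 0)"

end

theory Submission
  imports Defs "HOL-Computational_Algebra.Polynomial"
begin


lemma hom_poly_scale:
  assumes "hom_poly d p" shows "p (c *s x) = c ^ d * p x"
proof -
  obtain cf where p: "p = (\<lambda>x. \<Sum>e\<in>{e. sum e UNIV = d}. cf e * (\<Prod>i\<in>UNIV. (x $ i) ^ e i))"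
    using assms unfolding hom_poly_def by blast
  have "(\<Prod>i\<in>UNIV. ((c *s x) $ i) ^ e i) = c ^ d * (\<Prod>i\<in>UNIV. (x $ i) ^ e i)"
    if "sum e UNIV = d" for e :: "4 \<Rightarrow> nat"
    using that by (simp add: power_mult_distrib prod.distrib power_sum[symmetric])
  then show ?thesis unfolding p
    by (simp add: sum_distrib_left mult.left_commute)
qed

lemma hom_poly_line:
  assumes "hom_poly d p" shows "\<exists>P. \<forall>t. p (a + t *s b) = poly P t"
proof -
  obtain cf where p: "p = (\<lambda>x. \<Sum>e\<in>{e. sum e UNIV = d}. cf e * (\<Prod>i\<in>UNIV. (x $ i) ^ e i))"
    using assms unfolding hom_poly_def by blast
  define P where "P = (\<Sum>e\<in>{e. sum e UNIV = d}. [:cf e:] * (\<Prod>i\<in>UNIV. [:a $ i, b $ i:] ^ e i))"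
  have "p (a + t *s b) = poly P t" for t
    unfolding p P_def poly_sum poly_prod by (simp add: poly_prod algebra_simps)
  then show ?thesis by blast
qed

definition ZC :: "(complex^4 \<Rightarrow> complex) set \<Rightarrow> (complex^4) set set" where
  "ZC F = {ppt l | l. l \<noteq> 0 \<and> (\<forall>p\<in>F. p l = 0)}"

lemma mem_ZC:
  assumes "l \<noteq> 0" "\<forall>p\<in>F. \<exists>d. hom_poly d p"
  shows "ppt l \<in> ZC F \<longleftrightarrow> (\<forall>p\<in>F. p l = 0)"
proof
  assume "ppt l \<in> ZC F"
  then obtain l' where l': "ppt l = ppt l'" "l' \<noteq> 0" "\<forall>p\<in>F. p l' = 0"
    unfolding ZC_def by blast
  have "l \<in> ppt l" unfolding ppt_def by (rule CollectI, rule exI[of _ 1]) simp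
  then obtain c where "l = c *s l'" using l'(1) unfolding ppt_def by blast
  then show "\<forall>p\<in>F. p l = 0" using l'(3) assms(2) hom_poly_scale by fastforce
next
  assume "\<forall>p\<in>F. p l = 0" then show "ppt l \<in> ZC F" using assms(1) unfolding ZC_def by blast
qed

lemma zariski_closed_ZC: "zariski_closed Z \<longleftrightarrow> (\<exists>F. (\<forall>p\<in>F. \<exists>d. hom_poly d p) \<and> Z = ZC F)"
  unfolding zariski_closed_def ZC_def by simp

lemma ZC_subset_all: "ZC F \<subseteq> ZC {}"
  unfolding ZC_def by blast

lemma irreducible_ZC:
  assumes F: "\<forall>p\<in>F. \<exists>d. hom_poly d p"
    and lin: "\<And>x y c. (\<forall>p\<in>F. p x = 0) \<Longrightarrow> (\<forall>p\<in>F. p y = 0) \<Longrightarrow> (\<forall>p\<in>F. p (x + c *s y) = 0)"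
    and ne: "v \<noteq> 0" "\<forall>p\<in>F. p v = 0"
  shows "zariski_irreducible (ZC F)"
  unfolding zariski_irreducible_def
proof (intro conjI allI impI)
  show "zariski_closed (ZC F)" using F zariski_closed_ZC by blast
  show "ZC F \<noteq> {}" using ne unfolding ZC_def by blast
next
  fix Y1 Y2 assume H: "zariski_closed Y1 \<and> zariski_closed Y2 \<and> ZC F = Y1 \<union> Y2"
  obtain F1 where F1: "\<forall>p\<in>F1. \<exists>d. hom_poly d p" "Y1 = ZC F1" using H zariski_closed_ZC by blast
  obtain F2 where F2: "\<forall>p\<in>F2. \<exists>d. hom_poly d p" "Y2 = ZC F2" using H zariski_closed_ZC by blast
  show "ZC F = Y1 \<or> ZC F = Y2"
  proof (rule ccontr)
    assume "\<not> ?thesis"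
    then obtain y1 y2 where "y1 \<in> ZC F - Y1" "y2 \<in> ZC F - Y2" using H by blast
    then obtain a b where a: "a \<noteq> 0" "\<forall>p\<in>F. p a = 0" "ppt a \<notin> ZC F1"
      and b: "b \<noteq> 0" "\<forall>p\<in>F. p b = 0" "ppt b \<notin> ZC F2"
      unfolding ZC_def F1 F2 by blast
    obtain p1 where p1: "p1 \<in> F1" "p1 a \<noteq> 0" using a(1,3) mem_ZC[OF a(1) F1(1)] by blast
    obtain p2 where p2: "p2 \<in> F2" "p2 b \<noteq> 0" using b(1,3) mem_ZC[OF b(1) F2(1)] by blast
    obtain d1 where d1: "hom_poly d1 p1" using F1(1) p1(1) by blast
    obtain d2 where d2: "hom_poly d2 p2" using F2(1) p2(1) by blast
    obtain P1 where P1: "\<And>t. p1 (a + t *s (b - a)) = poly P1 t" using hom_poly_line[OF d1] by blast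
    obtain P2 where P2: "\<And>t. p2 (a + t *s (b - a)) = poly P2 t" using hom_poly_line[OF d2] by blast
    have "poly P1 0 \<noteq> 0" using P1[of 0] p1 by simp
    hence "P1 \<noteq> 0" by auto
    have "poly P2 1 \<noteq> 0" using P2[of 1] p2 by simp
    hence "P2 \<noteq> 0" by auto
    have fin: "finite {t. poly (P1 * P2) t = 0}"
      using \<open>P1 \<noteq> 0\<close> \<open>P2 \<noteq> 0\<close> by (intro poly_roots_finite) simp
    have Sfin: "finite {t. a + t *s (b - a) = 0}"
    proof (cases "b - a = 0")
      case True then show ?thesis using a(1) by simp
    next
      case False
      have "t1 = t2" if "a + t1 *s (b - a) = 0" "a + t2 *s (b - a) = 0" for t1 t2
      proof -
        have "(t1 - t2) *s (b - a) = 0" using that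
          proof -
          have "(t1 - t2) *s (b - a) = (a + t1 *s (b - a)) - (a + t2 *s (b - a))"
            by (simp add: vec_eq_iff algebra_simps)
          then show ?thesis by (simp only: that diff_self)
        qed
        then have "t1 - t2 = 0" using False vec.scale_eq_0_iff by blast
        then show ?thesis by simp
      qed
      then have "{t. a + t *s (b - a) = 0} \<subseteq> {SOME t. a + t *s (b - a) = 0}"
        by (metis (mono_tags, lifting) mem_Collect_eq singletonI someI_ex subsetI)
      then show ?thesis using finite_subset by blast
    qed
    have "UNIV \<subseteq> {t. poly (P1 * P2) t = 0} \<union> {t. a + t *s (b - a) = 0}"
    proof
      fix t :: complex
      let ?v = "a + t *s (b - a)"
      show "t \<in> {t. poly (P1 * P2) t = 0} \<union> {t. a + t *s (b - a) = 0}"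
      proof (cases "?v = 0")
        case False
        have vF: "\<forall>p\<in>F. p ?v = 0"
        proof -
          have "\<forall>p\<in>F. p (b + (-1) *s a) = 0" using lin[OF b(2) a(2)] .
          hence "\<forall>p\<in>F. p (b - a) = 0" by simp
          then show ?thesis using lin[OF a(2)] by blast
        qed
        then have "ppt ?v \<in> ZC F" using False unfolding ZC_def by blast
        then have "ppt ?v \<in> ZC F1 \<or> ppt ?v \<in> ZC F2" using H F1 F2 by blast
        then have "p1 ?v = 0 \<or> p2 ?v = 0" using mem_ZC[OF False F1(1)] mem_ZC[OF False F2(1)] p1 p2 by blast
        then show ?thesis using P1 P2 by auto
      qed simp
    qed
    then have "finite (UNIV :: complex set)" using fin Sfin finite_subset by blast
    then show False using infinite_UNIV_char_0 by blast
  qed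
qed



lemma one_idx: "(r::1) = 1" by (metis UNIV_1 UNIV_I singletonD)

definition uu :: "rep141 \<Rightarrow> 4 \<Rightarrow> complex^4" where "uu R j = (\<chi> k. fst R j $ k $ 1)"
definition wf :: "rep141 \<Rightarrow> 4 \<Rightarrow> complex^4 \<Rightarrow> complex" where "wf R i v = (snd R i *v v) $ 1"
definition MM :: "rep141 \<Rightarrow> 4 \<Rightarrow> 4 \<Rightarrow> complex" where "MM R i j = wf R i (uu R j)"
definition ucomb :: "rep141 \<Rightarrow> complex^4 \<Rightarrow> complex^4" where "ucomb R l = (\<Sum>j\<in>UNIV. l $ j *s uu R j)"
definition wcomb :: "rep141 \<Rightarrow> complex^4 \<Rightarrow> complex^4 \<Rightarrow> complex" where "wcomb R l v = (\<Sum>i\<in>UNIV. l $ i * wf R i v)"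
definition lf :: "rep141 \<Rightarrow> 4 \<Rightarrow> complex^4 \<Rightarrow> complex" where "lf R i l = (\<Sum>k\<in>UNIV. MM R i k * l $ k)"

lemma fst_mult: "fst R j *v x = (x $ 1) *s uu R j"
  by (simp add: vec_eq_iff matrix_vector_mult_def uu_def mult.commute)

lemma snd_mult_comp: "(snd R i *v v) $ r = wf R i v"
  by (subst one_idx[of r]) (simp add: wf_def)

lemma snd_mult_eq0: "snd R i *v v = 0 \<longleftrightarrow> wf R i v = 0"
  by (simp add: vec_eq_iff snd_mult_comp)

lemma wf_add: "wf R i (x + y) = wf R i x + wf R i y"
  by (simp add: wf_def matrix_vector_right_distrib)

lemma wf_scale: "wf R i (c *s x) = c * wf R i x"
  by (simp add: wf_def vec.linear_scale[OF matrix_vector_mul_linear_gen])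

lemma wf_0: "wf R i 0 = 0"
  by (simp add: wf_def)

lemma wf_sum: "wf R i (sum h A) = (\<Sum>j\<in>A. wf R i (h j))"
  by (simp add: wf_def vec.linear_sum[OF matrix_vector_mul_linear_gen])

lemma wf_ucomb: "wf R i (ucomb R l) = lf R i l"
  by (simp add: ucomb_def wf_sum wf_scale lf_def MM_def mult.commute)

lemma MM_skew:
  assumes "is_rep R" shows "MM R i j + MM R j i = 0"
proof -
  have "(snd R i ** fst R j + snd R j ** fst R i) $ 1 $ 1 = 0"
    using assms unfolding is_rep_def by simp
  then show ?thesis
    by (simp add: MM_def wf_def uu_def matrix_matrix_mult_def matrix_vector_mult_def)
qed

lemma MM_diag: assumes "is_rep R" shows "MM R i i = 0"
  using MM_skew[OF assms, of i i] by simp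

lemma lincomb_fst: "lincomb l (fst R) *v x = (x $ 1) *s ucomb R l"
  by (simp add: vec_eq_iff matrix_vector_mult_def lincomb_def ucomb_def uu_def sum_component
      mult.commute)

lemma lincomb_snd: "(lincomb l (snd R) *v v) $ r = wcomb R l v"
proof -
  have "(lincomb l (snd R) *v v) $ r = (\<Sum>k\<in>UNIV. (\<Sum>i\<in>UNIV. l $ i * snd R i $ r $ k) * v $ k)"
    by (simp add: matrix_vector_mult_def lincomb_def)
  also have "\<dots> = (\<Sum>k\<in>UNIV. \<Sum>i\<in>UNIV. l $ i * snd R i $ r $ k * v $ k)"
    by (simp add: sum_distrib_right)
  also have "\<dots> = (\<Sum>i\<in>UNIV. \<Sum>k\<in>UNIV. l $ i * snd R i $ r $ k * v $ k)"
    by (rule sum.swap)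
  also have "\<dots> = (\<Sum>i\<in>UNIV. l $ i * (\<Sum>k\<in>UNIV. snd R i $ r $ k * v $ k))"
    by (simp add: sum_distrib_left mult.assoc)
  also have "\<dots> = wcomb R l v"
    by (subst one_idx[of r]) (simp add: wcomb_def wf_def matrix_vector_mult_def)
  finally show ?thesis .
qed

lemma wcomb_uu: assumes "is_rep R" shows "wcomb R l (uu R j) = - lf R j l"
proof -
  have "wcomb R l (uu R j) = (\<Sum>i\<in>UNIV. l $ i * MM R i j)" by (simp add: wcomb_def MM_def)
  also have "\<dots> = (\<Sum>i\<in>UNIV. - (MM R j i * l $ i))"
  proof (intro sum.cong refl)
    fix i
    have "MM R i j = - MM R j i" using MM_skew[OF assms, of i j] by (simp add: eq_neg_iff_add_eq_0)
    then show "l $ i * MM R i j = - (MM R j i * l $ i)" by simp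
  qed
  finally show ?thesis by (simp add: lf_def sum_negf)
qed

lemma inj_fst_iff: "inj ((*v) (lincomb l (fst R))) \<longleftrightarrow> ucomb R l \<noteq> 0"
proof
  assume "inj ((*v) (lincomb l (fst R)))"
  moreover have "(1::complex^1) \<noteq> 0" by (simp add: vec_eq_iff)
  ultimately show "ucomb R l \<noteq> 0"
  proof (intro notI)
    assume "inj ((*v) (lincomb l (fst R)))" "(1::complex^1) \<noteq> 0" "ucomb R l = 0"
    then have "lincomb l (fst R) *v 1 = lincomb l (fst R) *v 0" unfolding lincomb_fst by simp
    then show False using \<open>inj _\<close> \<open>(1::complex^1) \<noteq> 0\<close> by (meson injD)
  qed
next
  assume H: "ucomb R l \<noteq> 0"
  show "inj ((*v) (lincomb l (fst R)))"
  proof (rule injI)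
    fix x y :: "complex^1"
    assume "lincomb l (fst R) *v x = lincomb l (fst R) *v y"
    then have "(x $ 1 - y $ 1) *s ucomb R l = 0"
      unfolding lincomb_fst by (simp add: vec.scale_left_diff_distrib)
    then have "x $ 1 = y $ 1" using H by simp
    then show "x = y" by (simp add: vec_eq_iff)
  qed
qed

lemma surj_snd_iff: "surj ((*v) (lincomb l (snd R))) \<longleftrightarrow> (\<exists>v. wcomb R l v \<noteq> 0)"
proof
  assume "surj ((*v) (lincomb l (snd R)))"
  then obtain v where "lincomb l (snd R) *v v = 1" by (metis surjD)
  then have "(lincomb l (snd R) *v v) $ 1 = 1" by simp
  then have "wcomb R l v = 1" unfolding lincomb_snd .
  then show "\<exists>v. wcomb R l v \<noteq> 0" using one_neq_zero by metis
next
  assume "\<exists>v. wcomb R l v \<noteq> 0"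
  then obtain v where v: "wcomb R l v \<noteq> 0" by blast
  show "surj ((*v) (lincomb l (snd R)))"
  proof (rule surjI)
    fix y :: "complex^1"
    have "(lincomb l (snd R) *v ((y $ 1 / wcomb R l v) *s v)) $ r = y $ r" for r
      using v by (subst (2) one_idx[of r]) (simp add: vec.linear_scale[OF matrix_vector_mul_linear_gen] lincomb_snd)
    then show "lincomb l (snd R) *v ((y $ 1 / wcomb R l v) *s v) = y" by (simp add: vec_eq_iff)
  qed
qed



definition dl :: "4 \<Rightarrow> 4 \<Rightarrow> nat" where "dl k = (\<lambda>i. if i = k then 1 else 0)"

lemma inj_dl: "inj dl"
proof (rule injI)
  fix x y assume "dl x = dl y"
  then have "dl x x = dl y x" by simp
  then show "x = y" unfolding dl_def by (cases "x = y") auto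
qed

lemma E1_eq: "{e :: 4 \<Rightarrow> nat. sum e UNIV = 1} = range dl"
proof
  show "range dl \<subseteq> {e. sum e UNIV = 1}" by (auto simp: dl_def)
next
  show "{e :: 4 \<Rightarrow> nat. sum e UNIV = 1} \<subseteq> range dl"
  proof
    fix e :: "4 \<Rightarrow> nat" assume "e \<in> {e. sum e UNIV = 1}"
    then have s: "sum e UNIV = 1" by simp
    have "\<exists>k. e k \<noteq> 0"
    proof (rule ccontr)
      assume "\<not> ?thesis" then have "sum e UNIV = 0" by simp
      then show False using s by simp
    qed
    then obtain k where k: "e k \<noteq> 0" by blast
    have le: "e i \<le> 1" for i using s member_le_sum[of i UNIV e] by simp
    have z: "e i = 0" if "i \<noteq> k" for i
    proof -
      have "sum e {i, k} \<le> sum e UNIV" by (rule sum_mono2) auto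
      then have "e i + e k \<le> 1" using that s by simp
      then show ?thesis using k by linarith
    qed
    have "e x = dl k x" for x
    proof (cases "x = k")
      case True then show ?thesis using k le[of k] by (simp add: dl_def)
    next
      case False then show ?thesis using z by (simp add: dl_def)
    qed
    then have "e = dl k" by blast
    then show "e \<in> range dl" by blast
  qed
qed

lemma hom_poly_linear: "hom_poly 1 (\<lambda>x. \<Sum>k\<in>UNIV. m k * x $ k)"
  unfolding hom_poly_def
proof (intro exI[of _ "\<lambda>e. m (inv dl e)"])
  have pr: "(\<Prod>i\<in>UNIV. (x $ i) ^ dl k i) = x $ k" for x :: "complex^4" and k
  proof -
    have "(\<Prod>i\<in>UNIV. (x $ i) ^ dl k i) = (\<Prod>i\<in>UNIV. if i = k then x $ i else 1)"
      by (intro prod.cong refl) (simp add: dl_def)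
    also have "\<dots> = x $ k" by (simp add: prod.delta')
    finally show ?thesis .
  qed
  show "(\<lambda>x. \<Sum>k\<in>UNIV. m k * x $ k) =
    (\<lambda>x. \<Sum>e\<in>{e. sum e UNIV = 1}. m (inv dl e) * (\<Prod>i\<in>UNIV. x $ i ^ e i))"
    unfolding E1_eq by (simp add: sum.reindex[OF inj_dl] inv_f_f[OF inj_dl] pr)
qed

lemma linform_lin:
  fixes m :: "4 \<Rightarrow> complex" and x y :: "complex^4"
  shows
  "(\<Sum>k\<in>UNIV. m k * (x + c *s y) $ k) = (\<Sum>k\<in>UNIV. m k * x $ k) + c * (\<Sum>k\<in>UNIV. m k * y $ k)"
proof -
  have "(\<Sum>k\<in>UNIV. m k * (x + c *s y) $ k) = (\<Sum>k\<in>UNIV. m k * x $ k + c * (m k * y $ k))"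
    by (intro sum.cong refl) (simp add: algebra_simps)
  then show ?thesis by (simp add: sum.distrib sum_distrib_left)
qed

lemma ZC_mono: "F \<subseteq> G \<Longrightarrow> ZC G \<subseteq> ZC F"
  unfolding ZC_def by blast

lemma irr_all: "zariski_irreducible (ZC {})"
  by (rule irreducible_ZC[of "{}" "axis 1 1"]) (auto simp: axis_eq_0_iff)

lemma mem_ZC0: "l \<noteq> 0 \<Longrightarrow> ppt l \<in> ZC {}"
  unfolding ZC_def by blast

lemma mem_ZC1: "hom_poly d a \<Longrightarrow> l \<noteq> 0 \<Longrightarrow> ppt l \<in> ZC {a} \<longleftrightarrow> a l = 0"
  using mem_ZC[of l "{a}"] by auto

lemma mem_ZC2: "hom_poly d a \<Longrightarrow> hom_poly d' b \<Longrightarrow> l \<noteq> 0 \<Longrightarrow> ppt l \<in> ZC {a, b} \<longleftrightarrow> a l = 0 \<and> b l = 0"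
  using mem_ZC[of l "{a, b}"] by auto

lemma codim_lin:
  fixes A B :: "4 \<Rightarrow> complex"
  defines "a \<equiv> (\<lambda>l::complex^4. \<Sum>k\<in>UNIV. A k * l $ k)"
    and "b \<equiv> (\<lambda>l::complex^4. \<Sum>k\<in>UNIV. B k * l $ k)"
  assumes x1: "x1 \<noteq> 0" "a x1 = 0" "b x1 \<noteq> 0" and x2: "a x2 \<noteq> 0"
  shows "zariski_closed (ZC {a, b}) \<and> codim_ge2 (ZC {a, b})"
proof
  have ha: "hom_poly 1 a" unfolding a_def by (rule hom_poly_linear)
  have hb: "hom_poly 1 b" unfolding b_def by (rule hom_poly_linear)
  have "\<forall>p\<in>{a, b}. \<exists>d. hom_poly d p" using ha hb by blast
  then show "zariski_closed (ZC {a, b})" unfolding zariski_closed_ZC by blast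
  have x2nz: "x2 \<noteq> 0" using x2 unfolding a_def by auto
  have irr1: "zariski_irreducible (ZC {a})"
  proof (rule irreducible_ZC[of "{a}" x1])
    show "\<forall>p\<in>{a}. \<exists>d. hom_poly d p" using ha by blast
    fix x y c assume "\<forall>p\<in>{a}. p x = 0" "\<forall>p\<in>{a}. p y = 0"
    then have "a x = 0" "a y = 0" by auto
    moreover have "a (x + c *s y) = a x + c * a y" unfolding a_def by (rule linform_lin)
    ultimately show "\<forall>p\<in>{a}. p (x + c *s y) = 0" by simp
  next
    show "x1 \<noteq> 0" by (rule x1(1))
    show "\<forall>p\<in>{a}. p x1 = 0" using x1(2) by simp
  qed
  show "codim_ge2 (ZC {a, b})"
    unfolding codim_ge2_def
  proof (intro allI impI exI conjI)
    fix Y assume Y: "zariski_irreducible Y \<and> Y \<subseteq> ZC {a, b}"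
    show "zariski_irreducible (ZC {a})" by (rule irr1)
    show "zariski_irreducible (ZC {})" by (rule irr_all)
    have "ppt x1 \<in> ZC {a}" using mem_ZC1[OF ha x1(1)] x1(2) by simp
    moreover have "ppt x1 \<notin> ZC {a, b}" using mem_ZC2[OF ha hb x1(1)] x1(3) by simp
    moreover have "ZC {a, b} \<subseteq> ZC {a}" by (rule ZC_mono) auto
    ultimately show "Y \<subset> ZC {a}" using Y by blast
    have "ppt x2 \<notin> ZC {a}" using mem_ZC1[OF ha x2nz] x2 by simp
    moreover have "ppt x2 \<in> ZC {}" using mem_ZC0[OF x2nz] .
    moreover have "ZC {a} \<subseteq> ZC {}" by (rule ZC_mono) auto
    ultimately show "ZC {a} \<subset> ZC {}" by blast
  qed
qed

lemma not_codim_all: "\<not> codim_ge2 (ZC {})"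
proof
  assume "codim_ge2 (ZC {})"
  then obtain Y1 where "ZC {} \<subset> Y1" "zariski_irreducible Y1"
    unfolding codim_ge2_def using irr_all by blast
  then obtain F where "Y1 = ZC F" unfolding zariski_irreducible_def zariski_closed_ZC by blast
  then show False using \<open>ZC {} \<subset> Y1\<close> ZC_mono[of "{}" F] by blast
qed

lemma exists_outside:
  assumes "zariski_closed Z" "codim_ge2 Z"
  shows "\<exists>l. l \<noteq> 0 \<and> ppt l \<notin> Z"
proof (rule ccontr)
  assume "\<not> ?thesis"
  then have "ZC {} \<subseteq> Z" unfolding ZC_def by blast
  moreover obtain F where "Z = ZC F" using assms(1) zariski_closed_ZC by blast
  ultimately have "Z = ZC {}" using ZC_mono[of "{}" F] by blast
  then show False using assms(2) not_codim_all by simp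
qed



definition P1 :: "rep141 \<Rightarrow> bool" where "P1 R \<longleftrightarrow> (\<forall>v. (\<forall>i. wf R i v = 0) \<longrightarrow> v = 0)"
definition P2 :: "rep141 \<Rightarrow> bool" where "P2 R \<longleftrightarrow> (\<forall>l. ucomb R l = 0 \<longrightarrow> l = 0)"
definition QQ :: "rep141 \<Rightarrow> bool" where "QQ R \<longleftrightarrow> (\<exists>i j. MM R i j \<noteq> 0)"
definition KK :: "rep141 \<Rightarrow> (complex^4) set" where "KK R = {v. \<forall>i. wf R i v = 0}"
definition Umat :: "rep141 \<Rightarrow> complex^4^4" where "Umat R = (\<chi> k j. uu R j $ k)"
definition Nmat :: "rep141 \<Rightarrow> complex^4^4" where "Nmat R = (\<chi> i k. snd R i $ 1 $ k)"

lemma sum_axis: "(\<Sum>k\<in>UNIV. (f k::complex) * axis j 1 $ k) = f j"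
proof -
  have "(\<Sum>k\<in>UNIV. (f k::complex) * axis j 1 $ k) = (\<Sum>k\<in>UNIV. if k = j then f k else 0)"
    by (intro sum.cong refl) (simp add: axis_def)
  also have "\<dots> = f j" by (simp add: sum.delta')
  finally show ?thesis .
qed

lemma sum_axis_vec: "(\<Sum>k\<in>UNIV. axis j 1 $ k *s (u k :: complex^4)) = u j"
proof -
  have "(\<Sum>k\<in>UNIV. axis j 1 $ k *s (u k :: complex^4)) = (\<Sum>k\<in>UNIV. if k = j then u k else 0)"
    by (intro sum.cong refl) (simp add: axis_def)
  also have "\<dots> = u j" by (simp add: sum.delta')
  finally show ?thesis .
qed

lemma ucomb_Umat: "ucomb R l = Umat R *v l"
  by (simp add: vec_eq_iff ucomb_def Umat_def matrix_vector_mult_def sum_component mult.commute)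

lemma ucomb_axis: "ucomb R (axis j 1) = uu R j"
  unfolding ucomb_def by (rule sum_axis_vec)

lemma ucomb_scale: "ucomb R (c *s l) = c *s ucomb R l"
  unfolding ucomb_Umat by (rule vec.linear_scale[OF matrix_vector_mul_linear_gen])

lemma ucomb_add: "ucomb R (l + l') = ucomb R l + ucomb R l'"
  unfolding ucomb_Umat by (rule matrix_vector_right_distrib)

lemma lf_axis: "lf R i (axis j 1) = MM R i j"
  unfolding lf_def by (rule sum_axis)

lemma Nmat_mult: "(Nmat R *v v) $ i = wf R i v"
  by (simp add: Nmat_def wf_def matrix_vector_mult_def)

lemma wcomb_N: "wcomb R l v = (\<Sum>k\<in>UNIV. (transpose (Nmat R) *v l) $ k * v $ k)"
proof -
  have "wcomb R l v = (\<Sum>i\<in>UNIV. \<Sum>k\<in>UNIV. l $ i * snd R i $ 1 $ k * v $ k)"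
    by (simp add: wcomb_def wf_def matrix_vector_mult_def sum_distrib_left mult.assoc)
  also have "\<dots> = (\<Sum>k\<in>UNIV. \<Sum>i\<in>UNIV. l $ i * snd R i $ 1 $ k * v $ k)"
    by (rule sum.swap)
  also have "\<dots> = (\<Sum>k\<in>UNIV. (transpose (Nmat R) *v l) $ k * v $ k)"
    by (simp add: transpose_def Nmat_def matrix_vector_mult_def sum_distrib_right sum_distrib_left mult_ac)
  finally show ?thesis .
qed

lemma inj_surj_sq:
  fixes A :: "complex^4^4"
  shows "inj ((*v) A) \<longleftrightarrow> surj ((*v) A)"
  using matrix_left_invertible_injective[of A] matrix_right_invertible_surjective[of A]
    matrix_left_right_inverse[of A] by auto

lemma ker_transpose:
  fixes A :: "complex^4^4"
  shows "(\<forall>x. A *v x = 0 \<longrightarrow> x = 0) \<longleftrightarrow> (\<forall>x. transpose A *v x = 0 \<longrightarrow> x = 0)"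
proof -
  have "(\<forall>x. A *v x = 0 \<longrightarrow> x = 0) \<longleftrightarrow> (\<exists>B. B ** A = mat 1)"
    by (simp add: matrix_left_invertible_ker)
  also have "\<dots> \<longleftrightarrow> (\<exists>B. A ** B = mat 1)" using matrix_left_right_inverse by blast
  also have "\<dots> \<longleftrightarrow> (\<exists>B. B ** transpose A = mat 1)"
  proof
    assume "\<exists>B. A ** B = mat 1"
    then obtain B where "A ** B = mat 1" by blast
    then have "transpose B ** transpose A = mat 1"
      by (metis matrix_transpose_mul transpose_mat)
    then show "\<exists>B. B ** transpose A = mat 1" by blast
  next
    assume "\<exists>B. B ** transpose A = mat 1"
    then obtain B where "B ** transpose A = mat 1" by blast
    then have "A ** transpose B = mat 1"
      by (metis matrix_transpose_mul transpose_mat transpose_transpose)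
    then show "\<exists>B. A ** B = mat 1" by blast
  qed
  also have "\<dots> \<longleftrightarrow> (\<forall>x. transpose A *v x = 0 \<longrightarrow> x = 0)"
    by (simp add: matrix_left_invertible_ker)
  finally show ?thesis .
qed

lemma P1_iff_gs: "P1 R \<longleftrightarrow> globally_surjective R"
proof -
  have "P1 R \<longleftrightarrow> (\<forall>x. Nmat R *v x = 0 \<longrightarrow> x = 0)"
    unfolding P1_def by (simp add: vec_eq_iff Nmat_mult)
  also have "\<dots> \<longleftrightarrow> (\<forall>x. transpose (Nmat R) *v x = 0 \<longrightarrow> x = 0)" by (rule ker_transpose)
  also have "\<dots> \<longleftrightarrow> globally_surjective R"
    unfolding globally_surjective_def surj_snd_iff
  proof (intro iffI allI impI)
    fix l :: "complex^4" assume H: "\<forall>x. transpose (Nmat R) *v x = 0 \<longrightarrow> x = 0" "l \<noteq> 0"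
    then obtain k where k: "(transpose (Nmat R) *v l) $ k \<noteq> 0" by (metis vec_eq_iff zero_index)
    have "wcomb R l (axis k 1) = (transpose (Nmat R) *v l) $ k"
      unfolding wcomb_N by (rule sum_axis)
    then show "\<exists>v. wcomb R l v \<noteq> 0" using k by metis
  next
    fix l :: "complex^4" assume H: "\<forall>l. l \<noteq> 0 \<longrightarrow> (\<exists>v. wcomb R l v \<noteq> 0)" "transpose (Nmat R) *v l = 0"
    show "l = 0"
    proof (rule ccontr)
      assume "l \<noteq> 0"
      then obtain v where "wcomb R l v \<noteq> 0" using H(1) by blast
      then show False unfolding wcomb_N using H(2) by simp
    qed
  qed
  finally show ?thesis .
qed

lemma P2_iff_gi: "P2 R \<longleftrightarrow> globally_injective R"
  unfolding P2_def globally_injective_def inj_fst_iff by blast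

lemma P2_surj: "P2 R \<Longrightarrow> surj (ucomb R)"
proof -
  assume "P2 R"
  then have "inj ((*v) (Umat R))"
    unfolding P2_def ucomb_Umat by (simp add: vec.inj_iff_eq_0)
  then have "surj ((*v) (Umat R))" using inj_surj_sq by blast
  then show ?thesis unfolding ucomb_Umat by (metis (no_types) ext)
qed

lemma notP2_not_surj: "\<not> P2 R \<Longrightarrow> range (ucomb R) \<noteq> UNIV"
proof -
  assume "\<not> P2 R"
  then have "\<not> inj ((*v) (Umat R))"
    unfolding P2_def ucomb_Umat by (simp add: vec.inj_iff_eq_0)
  then have "\<not> surj ((*v) (Umat R))" using inj_surj_sq by blast
  then show ?thesis unfolding ucomb_Umat by (metis (no_types) ext)
qed


lemma dim1: "vec.dim (S::(complex^1) set) \<le> 1"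
  using dim_subset_UNIV_cart_gen[of S] by simp

lemma dim4: "vec.dim (S::(complex^4) set) \<le> 4"
  using dim_subset_UNIV_cart_gen[of S] by simp

lemma dim0_eq: "vec.subspace S \<Longrightarrow> vec.dim S = 0 \<Longrightarrow> S = {0}"
  using vec.dim_eq_0 vec.subspace_0 by blast

lemma dim_full:
  fixes S :: "('a::field^'n) set"
  assumes "vec.subspace S" "vec.dim S = CARD('n)" shows "S = UNIV"
  using vec.subspace_dim_equal[OF assms(1) vec.subspace_UNIV subset_UNIV] assms(2) vec_dim_card
  by (metis order_refl)

lemma dim_zero_set: "vec.dim {0::'a::field^'n} = 0"
  by simp

lemma theta_sdim: "theta_dot (a1, b1, c1) (sdim Wm W0 W1) =
   a1 * real (vec.dim Wm) + b1 * real (vec.dim W0) + c1 * real (vec.dim W1)"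
  by (simp add: theta_dot_def sdim_def)

lemma stable_semi: "stable th R \<Longrightarrow> semistable th R"
  unfolding stable_def semistable_def
proof (intro conjI allI impI)
  fix Wm W0 W1 assume st: "theta_dot th (1, 4, 1) = 0 \<and> (\<forall>Wm W0 W1. is_subrep R Wm W0 W1 \<and> (Wm, W0, W1) \<noteq> ({0}, {0}, {0})
        \<and> (Wm, W0, W1) \<noteq> (UNIV, UNIV, UNIV) \<longrightarrow> theta_dot th (sdim Wm W0 W1) < 0)"
    and sub: "is_subrep R Wm W0 W1"
  show "theta_dot th (sdim Wm W0 W1) \<le> 0"
  proof (cases "(Wm, W0, W1) = ({0}, {0}, {0})")
    case True then show ?thesis by (simp add: sdim_def theta_dot_def)
  next
    case False
    show ?thesis
    proof (cases "(Wm, W0, W1) = (UNIV, UNIV, UNIV)")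
      case True
      then have "sdim Wm W0 W1 = (1, 4, 1)" by (simp add: sdim_def card_cart_basis)
      then show ?thesis using st by simp
    next
      case False2: False
      then show ?thesis using st sub False by force
    qed
  qed
qed (simp add: stable_def)

lemma subspace_KK: "vec.subspace (KK R)"
  by (rule vec.subspaceI) (auto simp: KK_def wf_0 wf_add wf_scale)

lemma subrep_K:
  assumes "vec.subspace Wm" "\<And>j x. x \<in> Wm \<Longrightarrow> fst R j *v x \<in> KK R"
  shows "is_subrep R Wm (KK R) {0}"
  unfolding is_subrep_def using assms subspace_KK
  by (auto simp: KK_def snd_mult_eq0)

lemma nz1: "(x::complex^1) \<noteq> 0 \<Longrightarrow> x $ 1 \<noteq> 0"
  by (simp add: vec_eq_iff)

lemma one1: "(1::complex^1) $ 1 = 1" by simp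

lemma ucomb_0: "ucomb R 0 = 0" by (simp add: ucomb_def)

lemma subspace_range_ucomb: "vec.subspace (range (ucomb R))"
proof (rule vec.subspaceI)
  show "0 \<in> range (ucomb R)" using ucomb_0 by (metis rangeI)
  show "x + y \<in> range (ucomb R)" if "x \<in> range (ucomb R)" "y \<in> range (ucomb R)" for x y
    using that by (auto simp: ucomb_add[symmetric])
  show "c *s x \<in> range (ucomb R)" if "x \<in> range (ucomb R)" for c x
    using that by (auto simp: ucomb_scale[symmetric])
qed

lemma case1:
  fixes \<alpha> \<beta> \<gamma> :: real
  assumes a: "\<alpha> > 0" and b: "\<beta> > 0" and s: "\<alpha> + 4 * \<beta> + \<gamma> = 0" and rep: "is_rep R"
  shows "semistable (\<alpha>, \<beta>, \<gamma>) R \<Longrightarrow> P1 R \<and> QQ R"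
    and "P1 R \<Longrightarrow> QQ R \<Longrightarrow> stable (\<alpha>, \<beta>, \<gamma>) R"
proof -
  assume ss: "semistable (\<alpha>, \<beta>, \<gamma>) R"
  have th: "\<And>Wm W0 W1. is_subrep R Wm W0 W1 \<Longrightarrow>
      \<alpha> * real (vec.dim Wm) + \<beta> * real (vec.dim W0) + \<gamma> * real (vec.dim W1) \<le> 0"
    using ss unfolding semistable_def theta_sdim[symmetric] by blast
  have "P1 R"
    unfolding P1_def
  proof (intro allI impI)
    fix v assume v: "\<forall>i. wf R i v = 0"
    have "is_subrep R {0} (KK R) {0}"
      by (rule subrep_K) (auto simp: KK_def wf_0)
    from th[OF this] have "\<beta> * real (vec.dim (KK R)) \<le> 0" by simp
    then have "vec.dim (KK R) = 0" using b by (simp add: mult_le_0_iff)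
    then have "KK R \<subseteq> {0}" using vec.dim_eq_0 by blast
    then show "v = 0" using v by (auto simp: KK_def)
  qed
  moreover have "QQ R"
  proof (rule ccontr)
    assume "\<not> QQ R"
    then have M0: "MM R i j = 0" for i j unfolding QQ_def by blast
    have "is_subrep R UNIV (KK R) {0}"
      by (rule subrep_K) (auto simp: KK_def fst_mult wf_scale M0[unfolded MM_def])
    from th[OF this] have "\<alpha> + \<beta> * real (vec.dim (KK R)) \<le> 0" by (simp add: card_cart_basis)
    moreover have "\<beta> * real (vec.dim (KK R)) \<ge> 0" using b by simp
    ultimately show False using a by linarith
  qed
  ultimately show "P1 R \<and> QQ R" by blast
next
  assume p1: "P1 R" and q: "QQ R"
  show "stable (\<alpha>, \<beta>, \<gamma>) R"
    unfolding stable_def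
  proof (intro conjI allI impI)
    show "theta_dot (\<alpha>, \<beta>, \<gamma>) (1, 4, 1) = 0" using s by (simp add: theta_dot_def)
    fix Wm W0 W1 assume H: "is_subrep R Wm W0 W1 \<and> (Wm, W0, W1) \<noteq> ({0}, {0}, {0}) \<and> (Wm, W0, W1) \<noteq> (UNIV, UNIV, UNIV)"
    then have sub: "is_subrep R Wm W0 W1" and nt: "(Wm, W0, W1) \<noteq> ({0}, {0}, {0})"
      and nf: "(Wm, W0, W1) \<noteq> (UNIV, UNIV, UNIV)" by auto
    have sm: "vec.subspace Wm" and s0: "vec.subspace W0" and s1: "vec.subspace W1"
      and mf: "\<And>j x. x \<in> Wm \<Longrightarrow> fst R j *v x \<in> W0"
      and mg: "\<And>i y. y \<in> W0 \<Longrightarrow> snd R i *v y \<in> W1"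
      using sub unfolding is_subrep_def by auto
    define a where "a = vec.dim Wm"
    define bb where "bb = vec.dim W0"
    define c where "c = vec.dim W1"
    have a1: "a \<le> 1" and c1: "c \<le> 1" and b4: "bb \<le> 4" unfolding a_def bb_def c_def using dim1 dim4 by auto
    show "theta_dot (\<alpha>, \<beta>, \<gamma>) (sdim Wm W0 W1) < 0"
    proof (cases "c = 0")
      case True
      then have W1: "W1 = {0}" using dim0_eq[OF s1] c_def by simp
      have W0: "W0 = {0}"
      proof -
        have "y = 0" if "y \<in> W0" for y
          using p1 mg[OF that] W1 unfolding P1_def by (simp add: snd_mult_eq0)
        then show ?thesis using vec.subspace_0[OF s0] by blast
      qed
      have "Wm = {0}"
      proof -
        have "x = 0" if "x \<in> Wm" for x
        proof (rule ccontr)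
          assume "x \<noteq> 0"
          then have x1: "x $ 1 \<noteq> 0" by (rule nz1)
          have "uu R j = 0" for j using mf[OF that, of j] W0 x1 by (simp add: fst_mult)
          then have "MM R i j = 0" for i j by (simp add: MM_def wf_0)
          then show False using q unfolding QQ_def by blast
        qed
        then show ?thesis using vec.subspace_0[OF sm] by blast
      qed
      then show ?thesis using W0 W1 nt by simp
    next
      case False
      then have c: "c = 1" using c1 by simp
      show ?thesis
      proof (cases "a = 0")
        case True
        have "\<beta> * real bb \<le> \<beta> * 4" using b b4 by (intro mult_left_mono) auto
        then show ?thesis using True c s a unfolding theta_sdim a_def[symmetric] bb_def[symmetric] c_def[symmetric]
          by simp
      next
        case False
        then have a: "a = 1" using a1 by simp
        show ?thesis
        proof (cases "bb = 4")
          case True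
          have "Wm = UNIV" using dim_full[OF sm] a a_def by simp
          moreover have "W0 = UNIV" using dim_full[OF s0] True bb_def by simp
          moreover have "W1 = UNIV" using dim_full[OF s1] c c_def by simp
          ultimately show ?thesis using nf by simp
        next
          case False
          then have "bb \<le> 3" using b4 by simp
          then have "\<beta> * real bb \<le> \<beta> * 3" using b by (intro mult_left_mono) auto
          moreover have "theta_dot (\<alpha>, \<beta>, \<gamma>) (sdim Wm W0 W1) = \<alpha> + \<beta> * real bb + \<gamma>"
            using a c unfolding theta_sdim a_def[symmetric] bb_def[symmetric] c_def[symmetric] by simp
          ultimately show ?thesis using s b by linarith
        qed
      qed
    qed
  qed
qed


lemma case2:
  fixes \<alpha> \<beta> \<gamma> :: real
  assumes a: "\<alpha> > 0" and b: "\<beta> < 0" and g: "\<gamma> < 0" and s: "\<alpha> + 4 * \<beta> + \<gamma> = 0" and rep: "is_rep R"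
  shows "semistable (\<alpha>, \<beta>, \<gamma>) R \<Longrightarrow> P2 R \<and> QQ R"
    and "P2 R \<Longrightarrow> QQ R \<Longrightarrow> stable (\<alpha>, \<beta>, \<gamma>) R"
proof -
  assume ss: "semistable (\<alpha>, \<beta>, \<gamma>) R"
  have th: "\<And>Wm W0 W1. is_subrep R Wm W0 W1 \<Longrightarrow>
      \<alpha> * real (vec.dim Wm) + \<beta> * real (vec.dim W0) + \<gamma> * real (vec.dim W1) \<le> 0"
    using ss unfolding semistable_def theta_sdim[symmetric] by blast
  have "P2 R"
  proof (rule ccontr)
    assume np: "\<not> P2 R"
    let ?W = "range (ucomb R)"
    have "is_subrep R UNIV ?W UNIV"
      unfolding is_subrep_def
    proof (intro conjI allI impI)
      show "vec.subspace ?W" by (rule subspace_range_ucomb)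
      fix j and x :: "complex^1"
      have "fst R j *v x = ucomb R (x $ 1 *s axis j 1)"
        by (simp add: fst_mult ucomb_scale ucomb_axis)
      then show "fst R j *v x \<in> ?W" by simp
    qed auto
    from th[OF this] have le: "\<alpha> + \<beta> * real (vec.dim ?W) + \<gamma> \<le> 0" by (simp add: card_cart_basis)
    have "vec.dim ?W \<noteq> 4"
    proof
      assume "vec.dim ?W = 4"
      then have "?W = UNIV" using dim_full[OF subspace_range_ucomb] by simp
      then show False using notP2_not_surj[OF np] by simp
    qed
    then have "vec.dim ?W \<le> 3" using dim4[of ?W] by simp
    then have "\<beta> * real (vec.dim ?W) \<ge> \<beta> * 3" using b by (intro mult_left_mono_neg) auto
    then show False using le s b by linarith
  qed
  moreover have "QQ R"
  proof (rule ccontr)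
    assume "\<not> QQ R"
    then have M0: "MM R i j = 0" for i j unfolding QQ_def by blast
    have "is_subrep R UNIV (KK R) {0}"
      by (rule subrep_K) (auto simp: KK_def fst_mult wf_scale M0[unfolded MM_def])
    from th[OF this] have le: "\<alpha> + \<beta> * real (vec.dim (KK R)) \<le> 0" by (simp add: card_cart_basis)
    have "\<beta> * real (vec.dim (KK R)) \<ge> \<beta> * 4" using b dim4[of "KK R"] by (intro mult_left_mono_neg) auto
    then show False using le s g by linarith
  qed
  ultimately show "P2 R \<and> QQ R" by blast
next
  assume p2: "P2 R" and q: "QQ R"
  show "stable (\<alpha>, \<beta>, \<gamma>) R"
    unfolding stable_def
  proof (intro conjI allI impI)
    show "theta_dot (\<alpha>, \<beta>, \<gamma>) (1, 4, 1) = 0" using s by (simp add: theta_dot_def)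
    fix Wm W0 W1 assume H: "is_subrep R Wm W0 W1 \<and> (Wm, W0, W1) \<noteq> ({0}, {0}, {0}) \<and> (Wm, W0, W1) \<noteq> (UNIV, UNIV, UNIV)"
    then have sub: "is_subrep R Wm W0 W1" and nt: "(Wm, W0, W1) \<noteq> ({0}, {0}, {0})"
      and nf: "(Wm, W0, W1) \<noteq> (UNIV, UNIV, UNIV)" by auto
    have sm: "vec.subspace Wm" and s0: "vec.subspace W0" and s1: "vec.subspace W1"
      and mf: "\<And>j x. x \<in> Wm \<Longrightarrow> fst R j *v x \<in> W0"
      and mg: "\<And>i y. y \<in> W0 \<Longrightarrow> snd R i *v y \<in> W1"
      using sub unfolding is_subrep_def by auto
    define a where "a = vec.dim Wm"
    define bb where "bb = vec.dim W0"
    define c where "c = vec.dim W1"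
    have a1: "a \<le> 1" and c1: "c \<le> 1" and b4: "bb \<le> 4" unfolding a_def bb_def c_def using dim1 dim4 by auto
    have th: "theta_dot (\<alpha>, \<beta>, \<gamma>) (sdim Wm W0 W1) = \<alpha> * real a + \<beta> * real bb + \<gamma> * real c"
      unfolding theta_sdim a_def bb_def c_def by simp
    show "theta_dot (\<alpha>, \<beta>, \<gamma>) (sdim Wm W0 W1) < 0"
    proof (cases "a = 0")
      case False
      then have "a = 1" using a1 by simp
      then have Wm: "Wm = UNIV" using dim_full[OF sm] a_def by simp
      have uW: "uu R j \<in> W0" for j using mf[of 1 j] Wm by (simp add: fst_mult)
      have "ucomb R l \<in> W0" for l
        unfolding ucomb_def using uW s0 by (intro vec.subspace_sum vec.subspace_scale) auto
      then have W0: "W0 = UNIV" using P2_surj[OF p2] by (metis subsetI subset_antisym surj_def UNIV_I)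
      have "W1 \<noteq> {0}"
      proof
        assume W1: "W1 = {0}"
        have "MM R i j = 0" for i j using mg[OF uW[of j], of i] W1 by (simp add: MM_def snd_mult_eq0)
        then show False using q unfolding QQ_def by blast
      qed
      then have "c \<noteq> 0" using dim0_eq[OF s1] c_def by auto
      then have "c = 1" using c1 by simp
      then have "W1 = UNIV" using dim_full[OF s1] c_def by simp
      then show ?thesis using Wm W0 nf by simp
    next
      case True
      then have Wm: "Wm = {0}" using dim0_eq[OF sm] a_def by simp
      have nbc: "bb \<noteq> 0 \<or> c \<noteq> 0"
      proof (rule ccontr)
        assume "\<not> ?thesis"
        then have "W0 = {0}" "W1 = {0}" using dim0_eq[OF s0] dim0_eq[OF s1] bb_def c_def by auto
        then show False using Wm nt by simp
      qed
      have "\<beta> * real bb \<le> 0" using b by (simp add: mult_nonpos_nonneg)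
      moreover have "\<gamma> * real c \<le> 0" using g by (simp add: mult_nonpos_nonneg)
      moreover have "\<beta> * real bb < 0 \<or> \<gamma> * real c < 0" using nbc b g by (auto simp: mult_neg_pos)
      ultimately show ?thesis using th True by auto
    qed
  qed
qed

lemma loc_from_QQ:
  assumes rep: "is_rep R" and q: "QQ R"
  shows "locally_injective R \<and> locally_surjective R"
proof -
  obtain i0 j0 where m: "MM R i0 j0 \<noteq> 0" using q unfolding QQ_def by blast
  define a where "a = (\<lambda>l::complex^4. \<Sum>k\<in>UNIV. MM R i0 k * l $ k)"
  define b where "b = (\<lambda>l::complex^4. \<Sum>k\<in>UNIV. MM R j0 k * l $ k)"
  have la: "a = lf R i0" and lb: "b = lf R j0" unfolding a_def b_def by (simp_all add: fun_eq_iff lf_def)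
  have x1: "axis i0 (1::complex) \<noteq> 0" by (simp add: axis_eq_0_iff)
  have "a (axis i0 1) = 0" unfolding la lf_axis using MM_diag[OF rep] by simp
  moreover have "b (axis i0 1) \<noteq> 0" unfolding lb lf_axis using MM_skew[OF rep, of i0 j0] m
    by (simp add: add_eq_0_iff)
  moreover have "a (axis j0 1) \<noteq> 0" unfolding la lf_axis using m .
  ultimately have Z: "zariski_closed (ZC {a, b}) \<and> codim_ge2 (ZC {a, b})"
    using codim_lin[of "axis i0 1" "MM R i0" "MM R j0" "axis j0 1"] x1 unfolding a_def b_def by blast
  have ha: "hom_poly 1 a" unfolding a_def by (rule hom_poly_linear)
  have hb: "hom_poly 1 b" unfolding b_def by (rule hom_poly_linear)
  have out: "a l \<noteq> 0 \<or> b l \<noteq> 0" if "l \<noteq> 0" "ppt l \<notin> ZC {a, b}" for l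
    using mem_ZC2[OF ha hb that(1)] that(2) by blast
  have "locally_injective R"
    unfolding locally_injective_def
  proof (intro exI conjI allI impI)
    show "zariski_closed (ZC {a, b})" "codim_ge2 (ZC {a, b})" using Z by auto
    fix l :: "complex^4" assume l: "l \<noteq> 0 \<and> ppt l \<notin> ZC {a, b}"
    have "ucomb R l \<noteq> 0"
    proof
      assume "ucomb R l = 0"
      then have "a l = 0" "b l = 0" using wf_ucomb[of R i0 l] wf_ucomb[of R j0 l] wf_0 la lb by auto
      then show False using out l by blast
    qed
    then show "inj ((*v) (lincomb l (fst R)))" by (simp add: inj_fst_iff)
  qed
  moreover have "locally_surjective R"
    unfolding locally_surjective_def
  proof (intro exI conjI allI impI)
    show "zariski_closed (ZC {a, b})" "codim_ge2 (ZC {a, b})" using Z by auto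
    fix l :: "complex^4" assume l: "l \<noteq> 0 \<and> ppt l \<notin> ZC {a, b}"
    have "wcomb R l (uu R i0) \<noteq> 0 \<or> wcomb R l (uu R j0) \<noteq> 0"
      using out l wcomb_uu[OF rep] la lb by auto
    then show "surj ((*v) (lincomb l (snd R)))" by (auto simp: surj_snd_iff)
  qed
  ultimately show ?thesis by blast
qed

lemma li_imp: "locally_injective R \<Longrightarrow> \<exists>l. l \<noteq> 0 \<and> ucomb R l \<noteq> 0"
  unfolding locally_injective_def inj_fst_iff using exists_outside by blast

lemma ls_imp: "locally_surjective R \<Longrightarrow> \<exists>l v. l \<noteq> 0 \<and> wcomb R l v \<noteq> 0"
  unfolding locally_surjective_def surj_snd_iff using exists_outside by blast

lemma final1: "P1 R \<Longrightarrow> locally_injective R \<Longrightarrow> QQ R"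
proof (rule ccontr)
  assume p1: "P1 R" and li: "locally_injective R" and nq: "\<not> QQ R"
  have "uu R j = 0" for j using p1 nq unfolding P1_def QQ_def MM_def by blast
  then have "ucomb R l = 0" for l by (simp add: ucomb_def)
  then show False using li_imp[OF li] by blast
qed

lemma final2: "P2 R \<Longrightarrow> locally_surjective R \<Longrightarrow> QQ R"
proof (rule ccontr)
  assume p2: "P2 R" and ls: "locally_surjective R" and nq: "\<not> QQ R"
  obtain l v where "wcomb R l v \<noteq> 0" using ls_imp[OF ls] by blast
  moreover obtain l' where "v = ucomb R l'" using P2_surj[OF p2] by (metis surj_def)
  moreover have "wcomb R l (ucomb R l') = 0"
    using nq unfolding wcomb_def wf_ucomb lf_def QQ_def by simp
  ultimately show False by simp
qed

theorem mainTheorem13: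
  fixes \<alpha> \<gamma> :: real
  assumes "\<alpha> > 0" and "\<gamma> < 0"
  defines "\<theta> \<equiv> (\<alpha>, - (\<alpha> + \<gamma>) / 4, \<gamma>)"
  shows "(\<gamma> < - \<alpha> \<longrightarrow> (\<forall>R. is_rep R \<longrightarrow>
            (semistable \<theta> R \<longleftrightarrow> stable \<theta> R) \<and>
            (semistable \<theta> R \<longleftrightarrow> globally_surjective R \<and> locally_injective R))) \<and>
         (\<gamma> > - \<alpha> \<longrightarrow> (\<forall>R. is_rep R \<longrightarrow>
            (semistable \<theta> R \<longleftrightarrow> stable \<theta> R) \<and>
            (semistable \<theta> R \<longleftrightarrow> globally_injective R \<and> locally_surjective R)))"
proof (intro conjI impI allI)
  define \<beta> where "\<beta> = - (\<alpha> + \<gamma>) / 4"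
  have th: "\<theta> = (\<alpha>, \<beta>, \<gamma>)" unfolding \<theta>_def \<beta>_def ..
  have s: "\<alpha> + 4 * \<beta> + \<gamma> = 0" unfolding \<beta>_def by (simp add: field_simps)
  {
    fix R assume g: "\<gamma> < - \<alpha>" and rep: "is_rep R"
    have b: "\<beta> > 0" using g unfolding \<beta>_def by simp
    note c1 = case1[OF assms(1) b s rep]
    have e1: "semistable \<theta> R \<longleftrightarrow> P1 R \<and> QQ R" unfolding th using c1 stable_semi by blast
    show "(semistable \<theta> R \<longleftrightarrow> stable \<theta> R)" unfolding th using c1 stable_semi by blast
    show "semistable \<theta> R \<longleftrightarrow> globally_surjective R \<and> locally_injective R"
      unfolding e1 P1_iff_gs[symmetric] using loc_from_QQ[OF rep] final1 by blast
  next
    fix R assume g: "\<gamma> > - \<alpha>" and rep: "is_rep R"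
    have b: "\<beta> < 0" using g unfolding \<beta>_def by simp
    note c2 = case2[OF assms(1) b assms(2) s rep]
    have e2: "semistable \<theta> R \<longleftrightarrow> P2 R \<and> QQ R" unfolding th using c2 stable_semi by blast
    show "(semistable \<theta> R \<longleftrightarrow> stable \<theta> R)" unfolding th using c2 stable_semi by blast
    show "semistable \<theta> R \<longleftrightarrow> globally_injective R \<and> locally_surjective R"
      unfolding e2 P2_iff_gi[symmetric] using loc_from_QQ[OF rep] final2 by blast
  }
qed


end
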